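(* Let $\Omega\subset\mathbb R^n$ be open and bounded with $\mathcal C^2$ boundary, $p>2$, $\lambda>0$, $\varepsilon>0$, $f\in\mathbf{Lip}(\overline\Omega)$, and let $u^\varepsilon$ be the maximal viscosity solution of $(\mathrm{SC}_\varepsilon)$. Let $g\in\mathcal C(\overline\Omega)$ and let $v\in\mathbf{Lip}(\overline\Omega)$ be a viscosity subsolution of $\lambda v+|Dv|^p-g=0$ in $\Omega$ which is semiconvex in $\Omega$ with semiconvexity constant $K$. Then $$\min_{\overline\Omega}(u^\varepsilon-v)\ge\frac1\lambda\Big(-Kn\varepsilon+\min_{\overline\Omega}(f-g)\Big).$$
   Context: $v$ is semiconvex with constant $K$ in $\Omega$ if $-v$ is semiconcave with constant $K$, i.e. for all $x,y$ with $[x,y]\subset\Omega$ and $t\in[0,1]$: $v(tx+(1-t)y)-tv(x)-(1-t)v(y)\le t(1-t)\frac{K|x-y|^2}{2}$. Viscosity subsolution in $\Omega$ of $\lambda v+|Dv|^p-g=0$: for $\varphi\in\mathcal C^1$ with $v-\varphi$ having a local max at $x_0\in\Omega$, $\lambda v(x_0)+|D\varphi(x_0)|^p-g(x_0)\le0$. The state-constraint problem $(\mathrm{SC}_\varepsilon)$: $u\in\mathcal C(\overline\Omega)$ is a viscosity subsolution of $\lambda u+|Du|^p-\varepsilon\Delta u=f$ in $\Omega$ and a viscosity supersolution on $\overline\Omega$ (test at local minima relative to $\overline\Omega$, including boundary points). For $f$ Lipschitz its maximal solution $u^\varepsilon$ lies in $\mathcal C^2(\Omega)\cap\mathcal C^{0,\alpha_p}(\overline\Omega)$,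 $\alpha_p=\frac{p-2}{p-1}$, and satisfies $\liminf_{\Omega\ni x\to x_0}\frac{u^\varepsilon(x)-u^\varepsilon(x_0)}{|x-x_0|^{\alpha_p}}<0$ for every $x_0\in\partial\Omega$. *)

theory Defs
  imports "HOL-Analysis.Analysis"
begin

definition C2_with :: "'a::euclidean_space set \<Rightarrow> ('a \<Rightarrow> real) \<Rightarrow> ('a \<Rightarrow> 'a) \<Rightarrow> ('a \<Rightarrow> 'a \<Rightarrow> 'a) \<Rightarrow> bool" where
  "C2_with S psi G H \<longleftrightarrow> open S \<and>
     (\<forall>x\<in>S. (psi has_derivative (\<lambda>h. G x \<bullet> h)) (at x)) \<and>
     (\<forall>x\<in>S. (G has_derivative H x) (at x)) \<and>
     (\<forall>i\<in>Basis. \<forall>j\<in>Basis. continuous_on S (\<lambda>x. H x i \<bullet> j))"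

definition C1_with :: "'a::euclidean_space set \<Rightarrow> ('a \<Rightarrow> real) \<Rightarrow> ('a \<Rightarrow> 'a) \<Rightarrow> bool" where
  "C1_with S psi G \<longleftrightarrow> open S \<and>
     (\<forall>x\<in>S. (psi has_derivative (\<lambda>h. G x \<bullet> h)) (at x)) \<and> continuous_on S G"

definition lap :: "('a::euclidean_space \<Rightarrow> 'a) \<Rightarrow> real" where
  "lap Hx = (\<Sum>i\<in>Basis. Hx i \<bullet> i)"

definition C2_boundary :: "'a::euclidean_space set \<Rightarrow> bool" where
  "C2_boundary \<Omega> \<longleftrightarrow> (\<forall>x0\<in>frontier \<Omega>. \<exists>r>0. \<exists>psi G H.
      C2_with (ball x0 r) psi G H \<and>
      \<Omega> \<inter> ball x0 r = {x\<in>ball x0 r. psi x < 0} \<and>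
      (\<forall>x\<in>frontier \<Omega> \<inter> ball x0 r. G x \<noteq> 0))"

definition visc_sub2 :: "'a::euclidean_space set \<Rightarrow> real \<Rightarrow> real \<Rightarrow> real \<Rightarrow> ('a \<Rightarrow> real) \<Rightarrow> ('a \<Rightarrow> real) \<Rightarrow> bool" where
  "visc_sub2 \<Omega> lam p eps f u \<longleftrightarrow> (\<forall>x0\<in>\<Omega>. \<forall>U phi G H.
      x0 \<in> U \<longrightarrow> C2_with U phi G H \<longrightarrow>
      (\<exists>r>0. \<forall>x\<in>ball x0 r \<inter> \<Omega>. u x - phi x \<le> u x0 - phi x0) \<longrightarrow>
      lam * u x0 + norm (G x0) powr p - eps * lap (H x0) \<le> f x0)"

definition visc_super2_cl :: "'a::euclidean_space set \<Rightarrow> real \<Rightarrow> real \<Rightarrow> real \<Rightarrow> ('a \<Rightarrow> real) \<Rightarrow> ('a \<Rightarrow> real) \<Rightarrow> bool" where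
  "visc_super2_cl \<Omega> lam p eps f u \<longleftrightarrow> (\<forall>x0\<in>closure \<Omega>. \<forall>U phi G H.
      x0 \<in> U \<longrightarrow> C2_with U phi G H \<longrightarrow>
      (\<exists>r>0. \<forall>x\<in>ball x0 r \<inter> closure \<Omega>. u x - phi x \<ge> u x0 - phi x0) \<longrightarrow>
      lam * u x0 + norm (G x0) powr p - eps * lap (H x0) \<ge> f x0)"

definition SC_solution :: "'a::euclidean_space set \<Rightarrow> real \<Rightarrow> real \<Rightarrow> real \<Rightarrow> ('a \<Rightarrow> real) \<Rightarrow> ('a \<Rightarrow> real) \<Rightarrow> bool" where
  "SC_solution \<Omega> lam p eps f u \<longleftrightarrow> continuous_on (closure \<Omega>) u \<and>
      visc_sub2 \<Omega> lam p eps f u \<and> visc_super2_cl \<Omega> lam p eps f u"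

definition SC_maximal_solution :: "'a::euclidean_space set \<Rightarrow> real \<Rightarrow> real \<Rightarrow> real \<Rightarrow> ('a \<Rightarrow> real) \<Rightarrow> ('a \<Rightarrow> real) \<Rightarrow> bool" where
  "SC_maximal_solution \<Omega> lam p eps f u \<longleftrightarrow> SC_solution \<Omega> lam p eps f u \<and>
      (\<forall>w. SC_solution \<Omega> lam p eps f w \<longrightarrow> (\<forall>x\<in>closure \<Omega>. w x \<le> u x))"

definition visc_sub1 :: "'a::euclidean_space set \<Rightarrow> real \<Rightarrow> real \<Rightarrow> ('a \<Rightarrow> real) \<Rightarrow> ('a \<Rightarrow> real) \<Rightarrow> bool" where
  "visc_sub1 \<Omega> lam p g v \<longleftrightarrow> (\<forall>x0\<in>\<Omega>. \<forall>U phi G.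
      x0 \<in> U \<longrightarrow> C1_with U phi G \<longrightarrow>
      (\<exists>r>0. \<forall>x\<in>ball x0 r \<inter> \<Omega>. v x - phi x \<le> v x0 - phi x0) \<longrightarrow>
      lam * v x0 + norm (G x0) powr p - g x0 \<le> 0)"

definition semiconvex_on :: "'a::euclidean_space set \<Rightarrow> real \<Rightarrow> ('a \<Rightarrow> real) \<Rightarrow> bool" where
  "semiconvex_on \<Omega> K v \<longleftrightarrow> (\<forall>x y t. closed_segment x y \<subseteq> \<Omega> \<longrightarrow> 0 \<le> t \<longrightarrow> t \<le> 1 \<longrightarrow>
      v (t *\<^sub>R x + (1 - t) *\<^sub>R y) - t * v x - (1 - t) * v y \<le> t * (1 - t) * K * (norm (x - y))\<^sup>2 / 2)"

end

theory Submission
  imports Defs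
begin


lemma eps_limit:
  fixes X c :: real
  assumes "\<And>s. 0 < s \<Longrightarrow> s \<le> 1 \<Longrightarrow> X \<ge> - s * c"
  shows "X \<ge> 0"
proof (rule ccontr)
  assume "\<not> X \<ge> 0"
  hence X: "X < 0" by simp
  define s where "s = min 1 (-X / (\<bar>c\<bar> + 1))"
  have s0: "0 < s" using X by (simp add: s_def divide_neg_pos)
  have s1: "s \<le> 1" by (simp add: s_def)
  have "s * \<bar>c\<bar> \<le> (-X / (\<bar>c\<bar> + 1)) * \<bar>c\<bar>"
    by (intro mult_right_mono) (auto simp: s_def)
  also have "\<dots> < -X"
    using X by (simp add: field_simps)
  finally have "s * \<bar>c\<bar> < -X" .
  moreover have "s * c \<le> s * \<bar>c\<bar>" using s0 by (intro mult_left_mono) auto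
  ultimately show False using assms[OF s0 s1] by linarith
qed

lemma r1: "0 < (s::real) \<Longrightarrow> (s/(1+s)) * (1/(1+s)) * ((1+s)*D)^2 = s * D^2"
proof -
  assume s: "0 < s"
  have X: "(1+s)*(1+s) \<noteq> 0" using s by simp
  have "((1+s)*D)^2 = ((1+s)*(1+s))*D^2" by (simp add: power_mult_distrib power2_eq_square)
  moreover have "(s/(1+s)) * (1/(1+s)) = s / ((1+s)*(1+s))" by simp
  ultimately have "(s/(1+s)) * (1/(1+s)) * ((1+s)*D)^2 = (s / ((1+s)*(1+s))) * ((1+s)*(1+s)) * D^2"
    by (simp only: mult.assoc)
  also have "\<dots> = s * D^2" using X by simp
  finally show ?thesis .
qed

lemma key_arith:
  fixes A B C Q K D a s :: real
  assumes s: "0 < s"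
    and h1: "B - (s/(1+s)) * A - (1 - s/(1+s)) * C \<le> (s/(1+s)) * (1 - s/(1+s)) * K * ((1+s) * D)\<^sup>2 / 2"
    and h2: "C - B \<le> - s * Q + a * (s * D)\<^sup>2"
  shows "A \<ge> B + Q - K/2 * D\<^sup>2 - s * (a + K/2) * D\<^sup>2"
proof -
  have e1: "1 - s/(1+s) = 1/(1+s)" using s by (simp add: field_simps)
  have a1: "(1+s) * ((s/(1+s)) * A) = s * A" using s by simp
  have a2: "(1+s) * ((1/(1+s)) * C) = C" using s by simp
  have L: "(1+s) * (B - (s/(1+s)) * A - (1/(1+s)) * C) = (1+s) * B - s * A - C"
    by (simp only: right_diff_distrib a1 a2)
  have R0: "(s/(1+s)) * (1/(1+s)) * K * ((1+s)*D)\<^sup>2 / 2 = K * (s * D\<^sup>2) / 2"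
    by (subst r1[OF s, symmetric]) (simp add: algebra_simps)
  have R: "(1+s) * ((s/(1+s)) * (1/(1+s)) * K * ((1+s) * D)\<^sup>2 / 2) = s * (1+s) * K * D\<^sup>2 / 2"
    unfolding R0 by (simp add: algebra_simps)
  have "(1+s) * (B - (s/(1+s)) * A - (1/(1+s)) * C) \<le> (1+s) * ((s/(1+s)) * (1/(1+s)) * K * ((1+s) * D)\<^sup>2 / 2)"
    using h1 s unfolding e1 by (intro mult_left_mono) auto
  hence "(1+s) * B - s * A - C \<le> s * (1+s) * K * D\<^sup>2 / 2"
    unfolding L R .
  hence "s * A \<ge> s * (B + Q - K/2 * D\<^sup>2 - s * (a + K/2) * D\<^sup>2)"
    using h2 by (simp add: algebra_simps power2_eq_square)
  thus ?thesis using s by simp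
qed
lemma semiconvex_support:
  fixes v :: "'a::euclidean_space \<Rightarrow> real"
  assumes sc: "semiconvex_on \<Omega> K v" and B: "ball y0 R \<subseteq> \<Omega>"
    and up: "\<forall>y\<in>ball y0 R. v y - v y0 \<le> q \<bullet> (y - y0) + a * (norm (y - y0))\<^sup>2"
    and y: "y \<in> ball y0 R"
  shows "v y \<ge> v y0 + q \<bullet> (y - y0) - K/2 * (norm (y - y0))\<^sup>2"
proof -
  define D where "D = norm (y - y0)"
  have main: "v y - (v y0 + q \<bullet> (y - y0) - K/2 * D\<^sup>2) \<ge> - s * ((a + K/2) * D\<^sup>2)"
    if s0: "0 < s" and s1: "s \<le> 1" for s
  proof -
    define w where "w = y0 - s *\<^sub>R (y - y0)"
    define t where "t = s / (1 + s)"
    have wy0: "w - y0 = - s *\<^sub>R (y - y0)" by (simp add: w_def)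
    have nw: "norm (w - y0) = s * D" using s0 by (simp add: wy0 D_def)
    have "dist y0 w = s * D" using nw by (simp add: dist_norm norm_minus_commute)
    also have "\<dots> \<le> D" using s1 s0 by (simp add: D_def mult_left_le_one_le)
    also have "D < R" using y by (simp add: D_def dist_norm norm_minus_commute)
    finally have "dist y0 w < R" .
    hence wB: "w \<in> ball y0 R" by simp
    have seg: "closed_segment y w \<subseteq> \<Omega>"
      using closed_segment_subset[OF y wB convex_ball] B by blast
    have t0: "0 \<le> t" "t \<le> 1" using s0 by (auto simp: t_def)
    have yw: "y - w = (1 + s) *\<^sub>R (y - y0)" by (simp add: w_def algebra_simps)
    have comb: "t *\<^sub>R y + (1 - t) *\<^sub>R w = y0"
    proof -
      have e: "1 - t = 1 / (1 + s)" using s0 by (simp add: t_def field_simps)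
      have c1: "(1 + s) * t = s" using s0 by (simp add: t_def)
      have c2: "(1 + s) * (1 - t) = 1" using s0 unfolding e by simp
      have "(1 + s) *\<^sub>R (t *\<^sub>R y + (1 - t) *\<^sub>R w) = ((1 + s) * t) *\<^sub>R y + ((1 + s) * (1 - t)) *\<^sub>R w"
        by (simp add: scaleR_add_right)
      also have "\<dots> = (1 + s) *\<^sub>R y0"
        unfolding c1 c2 w_def by (simp add: algebra_simps)
      finally have "(1 + s) *\<^sub>R (t *\<^sub>R y + (1 - t) *\<^sub>R w) = (1 + s) *\<^sub>R y0" .
      thus ?thesis using s0 by simp
    qed
    have nyw: "norm (y - w) = (1 + s) * D" using s0 by (simp add: yw D_def)
    have "v (t *\<^sub>R y + (1 - t) *\<^sub>R w) - t * v y - (1 - t) * v w \<le> t * (1 - t) * K * (norm (y - w))\<^sup>2 / 2"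
      using sc seg t0 unfolding semiconvex_on_def by blast
    hence h1: "v y0 - t * v y - (1 - t) * v w \<le> t * (1 - t) * K * ((1 + s) * D)\<^sup>2 / 2"
      unfolding comb nyw .
    have h2: "v w - v y0 \<le> - s * (q \<bullet> (y - y0)) + a * (s * D)\<^sup>2"
    proof -
      have "v w - v y0 \<le> q \<bullet> (w - y0) + a * (norm (w - y0))\<^sup>2" using up wB by blast
      also have "\<dots> = - s * (q \<bullet> (y - y0)) + a * (s * D)\<^sup>2"
        unfolding nw unfolding wy0 by (simp add: inner_minus_right)
      finally show ?thesis .
    qed
    have "v y \<ge> v y0 + q \<bullet> (y - y0) - K/2 * D\<^sup>2 - s * (a + K/2) * D\<^sup>2"
      by (rule key_arith[OF s0 h1[unfolded t_def] h2])
    thus ?thesis by (simp add: algebra_simps)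
  qed
  have "v y - (v y0 + q \<bullet> (y - y0) - K/2 * D\<^sup>2) \<ge> 0"
    by (rule eps_limit) (rule main)
  thus ?thesis by (simp add: D_def)
qed


lemma psi_nonpos:
  fixes psi :: "'a::euclidean_space \<Rightarrow> real"
  assumes cont: "\<And>x. x \<in> ball z r \<Longrightarrow> isCont psi x"
    and eq: "\<Omega> \<inter> ball z r = {x\<in>ball z r. psi x < 0}"
    and x: "x \<in> closure \<Omega>" "x \<in> ball z r"
  shows "psi x \<le> 0"
proof (rule ccontr)
  assume "\<not> psi x \<le> 0"
  hence px: "psi x > 0" by simp
  obtain e where e: "e > 0" "\<And>y. dist y x < e \<Longrightarrow> dist (psi y) (psi x) < psi x"
    using cont[OF x(2)] px unfolding continuous_at_eps_delta by blast
  obtain e2 where e2: "e2 > 0" "ball x e2 \<subseteq> ball z r"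
    using x(2) open_ball open_contains_ball by blast
  obtain y where y: "y \<in> \<Omega>" "dist y x < min e e2"
    using x(1) e(1) e2(1) unfolding closure_approachable by (metis min_less_iff_conj)
  have "y \<in> ball z r" using y e2 by (auto simp: dist_commute)
  hence "psi y < 0" using eq y by blast
  moreover have "dist (psi y) (psi x) < psi x" using e y by simp
  ultimately show False by (simp add: dist_real_def)
qed

lemma cone:
  fixes \<Omega> :: "'a::euclidean_space set"
  assumes op: "open \<Omega>" and bd: "C2_boundary \<Omega>" and z: "z \<in> closure \<Omega>"
  shows "\<exists>\<nu> \<rho>. \<rho> > 0 \<and> (\<forall>x y t. x \<in> closure \<Omega> \<longrightarrow> dist x z < \<rho> \<longrightarrow> dist y z < \<rho> \<longrightarrow> t > 0
            \<longrightarrow> norm (y - x - t *\<^sub>R \<nu>) \<le> \<rho> * t \<longrightarrow> y \<in> \<Omega>)"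
proof (cases "z \<in> \<Omega>")
  case True
  then obtain \<rho> where "\<rho> > 0" "ball z \<rho> \<subseteq> \<Omega>" using op open_contains_ball by blast
  thus ?thesis by (intro exI[of _ 0] exI[of _ \<rho>]) (auto simp: dist_commute)
next
  case False
  hence zf: "z \<in> frontier \<Omega>" using z op by (simp add: frontier_def interior_open)
  then obtain r psi G H where r: "r > 0" and C2: "C2_with (ball z r) psi G H"
    and eq: "\<Omega> \<inter> ball z r = {x\<in>ball z r. psi x < 0}"
    and Gnz: "\<forall>x\<in>frontier \<Omega> \<inter> ball z r. G x \<noteq> 0"
    using bd unfolding C2_boundary_def by blast
  have dpsi: "\<And>x. x \<in> ball z r \<Longrightarrow> (psi has_derivative (\<lambda>h. G x \<bullet> h)) (at x)"
    and dG: "\<And>x. x \<in> ball z r \<Longrightarrow> (G has_derivative H x) (at x)"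
    using C2 unfolding C2_with_def by auto
  have zb: "z \<in> ball z r" using r by simp
  define c where "c = norm (G z)"
  have c: "c > 0" using Gnz zf zb by (simp add: c_def)
  have "isCont G z" using dG[OF zb] by (rule has_derivative_continuous)
  then obtain \<rho>1 where \<rho>1: "\<rho>1 > 0" "\<And>y. dist y z < \<rho>1 \<Longrightarrow> dist (G y) (G z) < c / 4"
    using c unfolding continuous_at_eps_delta by (metis zero_less_divide_iff zero_less_numeral)
  define \<rho> where "\<rho> = min (min \<rho>1 r) (c / 4)"
  have \<rho>: "\<rho> > 0" using \<rho>1 r c by (simp add: \<rho>_def)
  show ?thesis
  proof (intro exI[of _ "- G z"] exI[of _ \<rho>] conjI allI impI)
    show "\<rho> > 0" by (rule \<rho>)
    fix x y t
    assume x: "x \<in> closure \<Omega>" and dx: "dist x z < \<rho>" and dy: "dist y z < \<rho>" and t: "t > 0"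
      and cn: "norm (y - x - t *\<^sub>R (- G z)) \<le> \<rho> * t"
    have xb: "x \<in> ball z \<rho>" and yb: "y \<in> ball z \<rho>" using dx dy by (auto simp: dist_commute)
    have sub: "ball z \<rho> \<subseteq> ball z r" by (auto simp: \<rho>_def)
    have px: "psi x \<le> 0"
      by (rule psi_nonpos[OF _ eq x]) (use dpsi has_derivative_continuous sub xb in blast)+
    define w where "w = y - x"
    define f where "f = (\<lambda>s::real. psi (x + s *\<^sub>R w))"
    have segin: "x + s *\<^sub>R w \<in> ball z \<rho>" if "0 \<le> s" "s \<le> 1" for s
    proof -
      have "x + s *\<^sub>R w = (1 - s) *\<^sub>R x + s *\<^sub>R y" by (simp add: w_def algebra_simps)
      moreover have "(1 - s) *\<^sub>R x + s *\<^sub>R y \<in> closed_segment x y"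
        using that by (auto simp: closed_segment_def)
      ultimately show ?thesis using closed_segment_subset[OF xb yb convex_ball] by auto
    qed
    have fd: "(f has_derivative (\<lambda>h. G (x + s *\<^sub>R w) \<bullet> (h *\<^sub>R w))) (at s within {0..1})"
      if "0 \<le> s" "s \<le> 1" for s
    proof -
      have d1: "((\<lambda>s. x + s *\<^sub>R w) has_derivative (\<lambda>h. h *\<^sub>R w)) (at s within {0..1})"
        by (auto intro!: derivative_eq_intros)
      have d2: "(psi has_derivative (\<lambda>h. G (x + s *\<^sub>R w) \<bullet> h)) (at (x + s *\<^sub>R w))"
        using dpsi segin[OF that] sub by blast
      show ?thesis unfolding f_def
        using has_derivative_compose[OF d1 d2] by (simp add: o_def)
    qed
    obtain \<sigma> where \<sigma>: "\<sigma> \<in> {0<..<1}" and mv: "f 1 - f 0 = G (x + \<sigma> *\<^sub>R w) \<bullet> ((1 - 0) *\<^sub>R w)"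
      using mvt_simple[of 0 1 f "\<lambda>s h. G (x + s *\<^sub>R w) \<bullet> (h *\<^sub>R w)"] fd by auto
    define \<xi> where "\<xi> = x + \<sigma> *\<^sub>R w"
    have \<xi>b: "\<xi> \<in> ball z \<rho>" using segin \<sigma> by (simp add: \<xi>_def)
    have "dist \<xi> z < \<rho>1" using \<xi>b by (auto simp: \<rho>_def dist_commute)
    hence gd: "norm (G \<xi> - G z) < c / 4" using \<rho>1(2) by (simp add: dist_norm)
    have psi_eq: "psi y = psi x + G \<xi> \<bullet> w"
      using mv by (simp add: f_def \<xi>_def w_def)
    define e where "e = w - t *\<^sub>R (- G z)"
    have ne: "norm e \<le> \<rho> * t" using cn by (simp add: e_def w_def)
    have we: "w = t *\<^sub>R (- G z) + e" by (simp add: e_def)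
    have i1: "G \<xi> \<bullet> (- G z) \<le> - (c^2) + c^2 / 4"
    proof -
      have "G \<xi> \<bullet> (- G z) = - (G z \<bullet> G z) - (G \<xi> - G z) \<bullet> G z"
        by (simp add: inner_diff_left inner_minus_right)
      also have "G z \<bullet> G z = c^2" by (simp add: c_def power2_norm_eq_inner)
      also have "- ((G \<xi> - G z) \<bullet> G z) \<le> norm (G \<xi> - G z) * c"
        using norm_cauchy_schwarz[of "G z - G \<xi>" "G z"] by (simp add: c_def norm_minus_commute inner_diff_left)
      hence "- ((G \<xi> - G z) \<bullet> G z) \<le> c/4 * c"
      proof -
        have "norm (G \<xi> - G z) * c \<le> c/4 * c" using gd c by (intro mult_right_mono) auto
        thus ?thesis using \<open>- ((G \<xi> - G z) \<bullet> G z) \<le> norm (G \<xi> - G z) * c\<close> by linarith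
      qed
      ultimately show ?thesis by (simp add: power2_eq_square)
    qed
    have i2: "G \<xi> \<bullet> e \<le> (5 * c / 4) * (\<rho> * t)"
    proof -
      have "norm (G \<xi>) \<le> 5 * c / 4"
        using gd norm_triangle_ineq[of "G \<xi> - G z" "G z"] by (simp add: c_def)
      hence "norm (G \<xi>) * norm e \<le> (5 * c / 4) * (\<rho> * t)"
        using ne c by (intro mult_mono) auto
      thus ?thesis using norm_cauchy_schwarz[of "G \<xi>" e] by linarith
    qed
    have "\<rho> * t \<le> (c / 4) * t" using t by (intro mult_right_mono) (auto simp: \<rho>_def)
    hence i3: "G \<xi> \<bullet> e \<le> (5 * c / 4) * ((c / 4) * t)"
    proof -
      have "(5 * c / 4) * (\<rho> * t) \<le> (5 * c / 4) * ((c / 4) * t)"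
        using \<open>\<rho> * t \<le> (c / 4) * t\<close> c by (intro mult_left_mono) auto
      thus ?thesis using i2 by linarith
    qed
    have "G \<xi> \<bullet> w = t * (G \<xi> \<bullet> (- G z)) + G \<xi> \<bullet> e"
      unfolding we by (simp add: inner_add_right inner_diff_right)
    also have "\<dots> \<le> t * (- (c^2) + c^2 / 4) + (5 * c / 4) * ((c / 4) * t)"
    proof -
      have "t * (G \<xi> \<bullet> (- G z)) \<le> t * (- (c^2) + c^2 / 4)"
        using i1 t by (intro mult_left_mono) auto
      thus ?thesis using i3 by linarith
    qed
    also have "\<dots> < 0" using t c by (simp add: power2_eq_square field_simps)
    finally have "psi y < 0" using psi_eq px by linarith
    moreover have "y \<in> ball z r" using yb sub by blast
    ultimately show "y \<in> \<Omega>" using eq by blast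
  qed
qed

lemma powr_incr_bound:
  fixes A B A0 p :: real
  assumes p: "1 \<le> p" and A: "0 \<le> A" "A \<le> A0" and B: "0 \<le> B" "B \<le> 1"
  shows "(A + B) powr p - A powr p \<le> p * (A0 + 1) powr (p - 1) * B"
proof (cases "B = 0")
  case True thus ?thesis by simp
next
  case False
  hence lt: "A < A + B" using B by simp
  have cont: "continuous_on {A..A+B} (\<lambda>x. x powr p)"
    by (rule continuous_on_powr') (use A p in auto)
  have dif: "(\<lambda>x. x powr p) differentiable (at x)" if "A < x" for x
    using has_real_derivative_powr[of x p] that A unfolding real_differentiable_def by auto
  obtain l z where z: "A < z" "z < A + B" and d: "DERIV (\<lambda>x. x powr p) z :> l"
    and eq: "(A + B) powr p - A powr p = (A + B - A) * l"
    using MVT[OF lt cont] dif by blast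
  have "l = p * z powr (p - 1)"
    using DERIV_unique[OF d has_real_derivative_powr[of z p]] z A by linarith
  moreover have "z powr (p - 1) \<le> (A0 + 1) powr (p - 1)"
    by (rule powr_mono2) (use p z A B in auto)
  ultimately have "l \<le> p * (A0 + 1) powr (p - 1)"
    using p by (simp add: mult_left_mono)
  thus ?thesis using eq B by (simp add: mult.commute mult_left_mono)
qed

lemma small_mult: "0 < b \<Longrightarrow> 0 \<le> X \<Longrightarrow> 0 < d \<Longrightarrow> d \<le> b / (X + 1) \<Longrightarrow> d * X < (b::real)"
proof -
  assume b: "0 < b" and X: "0 \<le> X" and d: "0 < d" "d \<le> b / (X + 1)"
  have "d * X \<le> b / (X + 1) * X" using d X by (intro mult_right_mono) auto
  also have "\<dots> < b" using b X by (simp add: field_simps)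
  finally show ?thesis .
qed

lemma hd_sq:
  fixes a :: "'a::euclidean_space"
  shows "((\<lambda>x. (norm (x - a))\<^sup>2) has_derivative (\<lambda>h. (2 *\<^sub>R (x - a)) \<bullet> h)) (at x within S)"
proof -
  have "((\<lambda>x. inner (x - a) (x - a)) has_derivative (\<lambda>h. inner (x - a) h + inner h (x - a))) (at x within S)"
    by (auto intro!: derivative_eq_intros)
  then show ?thesis
    by (simp add: power2_norm_eq_inner inner_commute algebra_simps)
qed

lemma sq_expand:
  fixes y y0 e :: "'a::euclidean_space"
  shows "(norm (y - y0 + e))\<^sup>2 - (norm e)\<^sup>2 = 2 * (e \<bullet> (y - y0)) + (norm (y - y0))\<^sup>2"
  by (simp add: power2_norm_eq_inner inner_add_left inner_add_right inner_commute algebra_simps)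

lemma lap_const:
  "lap (\<lambda>h::'a::euclidean_space. c *\<^sub>R h) = c * real DIM('a)"
  unfolding lap_def by (simp add: inner_Basis)

theorem mainTheorem8:
  fixes \<Omega> :: "'a::euclidean_space set"
    and p lam eps K :: real
    and f g u v :: "'a \<Rightarrow> real"
  assumes "open \<Omega>" "bounded \<Omega>" "\<Omega> \<noteq> {}" "C2_boundary \<Omega>"
    and "p > 2" "lam > 0" "eps > 0"
    and "\<exists>L. L-lipschitz_on (closure \<Omega>) f"
    and "SC_maximal_solution \<Omega> lam p eps f u"
    and "continuous_on (closure \<Omega>) g"
    and "\<exists>L. L-lipschitz_on (closure \<Omega>) v"
    and "visc_sub1 \<Omega> lam p g v"
    and "semiconvex_on \<Omega> K v"
  shows "Inf ((\<lambda>x. u x - v x) ` closure \<Omega>)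
           \<ge> (1 / lam) * (- K * real DIM('a) * eps + Inf ((\<lambda>x. f x - g x) ` closure \<Omega>))"
proof -
  note op = assms(1) and bdd = assms(2) and nem = assms(3) and bd = assms(4)
    and p2 = assms(5) and lam = assms(6) and eps = assms(7)
    and gc = assms(10) and vsub = assms(12) and sc = assms(13)
  define C where "C = closure \<Omega>"
  define n where "n = real DIM('a)"
  have n0: "n > 0" by (simp add: n_def)
  have cpt: "compact C" using bdd by (simp add: C_def compact_closure)
  have Cne: "C \<noteq> {}" using nem by (simp add: C_def)
  have OC: "\<Omega> \<subseteq> C" by (simp add: C_def closure_subset)
  obtain Lv where Lv: "Lv-lipschitz_on C v" using assms(11) by (auto simp: C_def)
  obtain Lf where Lf: "Lf-lipschitz_on C f" using assms(8) by (auto simp: C_def)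
  have Lv0: "Lv \<ge> 0" and Lf0: "Lf \<ge> 0" using Lv Lf lipschitz_on_nonneg by blast+
  have vc: "continuous_on C v" using Lv by (rule lipschitz_on_continuous_on)
  have fc: "continuous_on C f" using Lf by (rule lipschitz_on_continuous_on)
  have gc': "continuous_on C g" using gc by (simp add: C_def)
  have uc: "continuous_on C u" and usup: "visc_super2_cl \<Omega> lam p eps f u"
    using assms(9) unfolding SC_maximal_solution_def SC_solution_def C_def by auto
  have Lvd: "\<bar>v x - v y\<bar> \<le> Lv * norm (x - y)" if "x \<in> C" "y \<in> C" for x y
    using lipschitz_onD[OF Lv that] by (simp add: dist_real_def dist_norm)
  have Lfd: "\<bar>f x - f y\<bar> \<le> Lf * norm (x - y)" if "x \<in> C" "y \<in> C" for x y
    using lipschitz_onD[OF Lf that] by (simp add: dist_real_def dist_norm)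
  obtain z where z: "z \<in> C" and zmin: "\<And>x. x \<in> C \<Longrightarrow> u z - v z \<le> u x - v x"
    using continuous_attains_inf[OF cpt Cne, of "\<lambda>x. u x - v x"] uc vc
    by (auto intro: continuous_on_diff)
  define m where "m = u z - v z"
  have Inf1: "Inf ((\<lambda>x. u x - v x) ` C) = m"
    unfolding m_def by (rule cInf_eq_minimum) (use z zmin in auto)
  obtain z2 where z2: "z2 \<in> C" and z2min: "\<And>x. x \<in> C \<Longrightarrow> f z2 - g z2 \<le> f x - g x"
    using continuous_attains_inf[OF cpt Cne, of "\<lambda>x. f x - g x"] fc gc'
    by (auto intro: continuous_on_diff)
  define mf where "mf = f z2 - g z2"
  have Inf2: "Inf ((\<lambda>x. f x - g x) ` C) = mf"
    unfolding mf_def by (rule cInf_eq_minimum) (use z2 z2min in auto)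
  have mfle: "\<And>x. x \<in> C \<Longrightarrow> mf \<le> f x - g x" using z2min by (simp add: mf_def)
  obtain y1 where y1: "y1 \<in> C" "\<And>y. y \<in> C \<Longrightarrow> \<bar>g y\<bar> \<le> \<bar>g y1\<bar>"
    using continuous_attains_sup[OF cpt Cne, of "\<lambda>y. \<bar>g y\<bar>"] gc'
    by (auto intro!: continuous_intros)
  obtain y2 where y2: "y2 \<in> C" "\<And>y. y \<in> C \<Longrightarrow> \<bar>v y\<bar> \<le> \<bar>v y2\<bar>"
    using continuous_attains_sup[OF cpt Cne, of "\<lambda>y. \<bar>v y\<bar>"] vc
    by (auto intro!: continuous_intros)
  define M where "M = \<bar>g y1\<bar> + lam * \<bar>v y2\<bar>"
  have Mb: "g y - lam * v y \<le> M" if "y \<in> C" for y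
  proof -
    have "- (lam * v y) \<le> lam * \<bar>v y2\<bar>"
    proof -
      have "lam * (- v y) \<le> lam * \<bar>v y2\<bar>" using y2(2)[OF that] lam by (intro mult_left_mono) auto
      thus ?thesis by simp
    qed
    thus ?thesis using y1(2)[OF that] unfolding M_def by linarith
  qed
  define A0 where "A0 = max 1 M"
  define Cp where "Cp = p * (A0 + 1) powr (p - 1)"
  have Cp0: "Cp \<ge> 0" using p2 by (simp add: Cp_def)
  obtain \<nu> \<rho> where \<rho>: "\<rho> > 0" and cone: "\<And>x y t. x \<in> C \<Longrightarrow> dist x z < \<rho> \<Longrightarrow> dist y z < \<rho> \<Longrightarrow> t > 0
            \<Longrightarrow> norm (y - x - t *\<^sub>R \<nu>) \<le> \<rho> * t \<Longrightarrow> y \<in> \<Omega>"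
    using cone[OF op bd z[unfolded C_def]] unfolding C_def by blast
  define N where "N = norm \<nu>"
  have N0: "N \<ge> 0" by (simp add: N_def)
  define r0 where "r0 = \<rho> / 2"
  have r0: "r0 > 0" using \<rho> by (simp add: r0_def)
  define C1 where "C1 = Lv * (2 * N / \<rho> + 1)"
  have C10: "C1 \<ge> 0" using Lv0 N0 \<rho> by (simp add: C1_def)
  have main: "- K * n * eps + mf \<le> lam * m + \<gamma>" if \<gamma>: "\<gamma> > 0" for \<gamma>
  proof -
    define X1 where "X1 = 2 * eps * n + Cp * 2 * r0"
    have X10: "X1 \<ge> 0" using eps n0 Cp0 r0 by (simp add: X1_def)
    define \<eta> where "\<eta> = min (1 / (2 * r0 + 1)) (\<gamma> / 3 / (X1 + 1))"
    have \<eta>0: "\<eta> > 0" using r0 \<gamma> X10 by (simp add: \<eta>_def)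
    have \<eta>1: "2 * \<eta> * r0 \<le> 1"
    proof -
      have "\<eta> * (2 * r0) < 1" by (rule small_mult) (use r0 \<eta>0 in \<open>auto simp: \<eta>_def\<close>)
      thus ?thesis by (simp add: algebra_simps)
    qed
    have \<eta>2: "\<eta> * X1 < \<gamma> / 3" by (rule small_mult) (use \<gamma> X10 \<eta>0 in \<open>auto simp: \<eta>_def\<close>)
    define X2 where "X2 = Lf * (N + \<rho>) + lam * Lv * N"
    have X20: "X2 \<ge> 0" using Lf0 Lv0 N0 \<rho> lam by (simp add: X2_def)
    define X3 where "X3 = Lv * (2 * N + \<rho>)"
    have X30: "X3 \<ge> 0" using Lv0 N0 \<rho> by (simp add: X3_def)
    define \<delta> where "\<delta> = min (min (\<eta> * r0\<^sup>2 / (X3 + 1)) (\<rho> / 2 / ((N + \<rho>) + 1))) (\<gamma> / 3 / (X2 + 1))"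
    have \<delta>0: "\<delta> > 0" using \<eta>0 r0 \<rho> \<gamma> X20 X30 N0 by (simp add: \<delta>_def)
    have \<delta>a: "\<delta> * X3 < \<eta> * r0\<^sup>2" by (rule small_mult) (use \<eta>0 r0 X30 \<delta>0 in \<open>auto simp: \<delta>_def\<close>)
    have \<delta>b: "\<delta> * (N + \<rho>) < \<rho> / 2" by (rule small_mult) (use \<rho> N0 \<delta>0 in \<open>auto simp: \<delta>_def\<close>)
    have \<delta>c: "\<delta> * X2 < \<gamma> / 3" by (rule small_mult) (use \<gamma> X20 \<delta>0 in \<open>auto simp: \<delta>_def\<close>)
    define k where "k = (C1 + 1) / (\<rho> * \<delta>)"
    have k0: "k > 0" using C10 \<rho> \<delta>0 by (simp add: k_def)
    define \<Phi> where "\<Phi> = (\<lambda>w. u (fst w) - v (snd w) + k * (norm (snd w - fst w - \<delta> *\<^sub>R \<nu>))\<^sup>2 + \<eta> * (norm (fst w - z))\<^sup>2)"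
    define S where "S = (C \<inter> cball z r0) \<times> C"
    have Scpt: "compact S" unfolding S_def
      by (intro compact_Times compact_Int_closed cpt compact_imp_closed compact_cball closed_cball)
    have Sne: "S \<noteq> {}" using z r0 by (auto simp: S_def)
    have c1: "continuous_on S (\<lambda>w. u (fst w))"
      by (rule continuous_on_compose2[OF uc continuous_on_fst[OF continuous_on_id]]) (auto simp: S_def)
    have c2: "continuous_on S (\<lambda>w. v (snd w))"
      by (rule continuous_on_compose2[OF vc continuous_on_snd[OF continuous_on_id]]) (auto simp: S_def)
    have \<Phi>c: "continuous_on S \<Phi>"
      unfolding \<Phi>_def by (intro continuous_intros c1 c2)
    obtain xy where xy: "xy \<in> S" and xymin: "\<And>w. w \<in> S \<Longrightarrow> \<Phi> xy \<le> \<Phi> w"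
      using continuous_attains_inf[OF Scpt Sne \<Phi>c] by blast
    obtain xd yd where xyd: "xy = (xd, yd)" by (cases xy)
    have xd: "xd \<in> C" "dist xd z \<le> r0" and yd: "yd \<in> C"
      using xy by (auto simp: S_def xyd dist_commute)
    have Phimin: "\<And>x y. x \<in> C \<Longrightarrow> dist x z \<le> r0 \<Longrightarrow> y \<in> C \<Longrightarrow> \<Phi> (xd, yd) \<le> \<Phi> (x, y)"
      using xymin by (auto simp: S_def xyd dist_commute)
    define e where "e = yd - xd - \<delta> *\<^sub>R \<nu>"
    define E where "E = norm e"
    define D where "D = norm (xd - z)"
    have \<Phi>d: "\<Phi> (xd, yd) = u xd - v yd + k * E\<^sup>2 + \<eta> * D\<^sup>2"
      by (simp add: \<Phi>_def E_def e_def D_def)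
    have "\<delta> * N \<le> \<delta> * (N + \<rho>)" using \<delta>0 \<rho> by (intro mult_left_mono) auto
    hence \<delta>N: "\<delta> * N < \<rho>" using \<delta>b \<rho> by linarith
    have F1: "z + \<delta> *\<^sub>R \<nu> \<in> \<Omega>"
    proof (rule cone[OF z _ _ \<delta>0])
      show "dist z z < \<rho>" using \<rho> by simp
      show "dist (z + \<delta> *\<^sub>R \<nu>) z < \<rho>" using \<delta>N \<delta>0 by (simp add: dist_norm N_def)
      show "norm (z + \<delta> *\<^sub>R \<nu> - z - \<delta> *\<^sub>R \<nu>) \<le> \<rho> * \<delta>" using \<rho> \<delta>0 by simp
    qed
    have F2: "\<Phi> (xd, yd) \<le> m + Lv * \<delta> * N"
    proof -
      have zC: "z + \<delta> *\<^sub>R \<nu> \<in> C" using F1 OC by blast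
      have "\<Phi> (xd, yd) \<le> \<Phi> (z, z + \<delta> *\<^sub>R \<nu>)" by (rule Phimin[OF z _ zC]) (use r0 in simp)
      also have "\<dots> = m + (v z - v (z + \<delta> *\<^sub>R \<nu>))" by (simp add: \<Phi>_def m_def)
      also have "v z - v (z + \<delta> *\<^sub>R \<nu>) \<le> Lv * norm (z - (z + \<delta> *\<^sub>R \<nu>))"
        using Lvd[OF z zC] by linarith
      also have "norm (z - (z + \<delta> *\<^sub>R \<nu>)) = \<delta> * N" using \<delta>0 by (simp add: N_def)
      finally show ?thesis by (simp add: mult.assoc)
    qed
    have ndist: "norm (xd - yd) \<le> \<delta> * N + E"
    proof -
      have "xd - yd = - (\<delta> *\<^sub>R \<nu> + e)" by (simp add: e_def algebra_simps)
      hence "norm (xd - yd) = norm (\<delta> *\<^sub>R \<nu> + e)" by (simp only: norm_minus_cancel)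
      also have "\<dots> \<le> norm (\<delta> *\<^sub>R \<nu>) + norm e" by (rule norm_triangle_ineq)
      finally show ?thesis using \<delta>0 by (simp add: N_def E_def)
    qed
    have F3: "\<Phi> (xd, yd) \<ge> m - Lv * (\<delta> * N + E) + k * E\<^sup>2 + \<eta> * D\<^sup>2"
    proof -
      have "m \<le> u xd - v xd" using zmin[OF xd(1)] by (simp add: m_def)
      moreover have "v xd - v yd \<ge> - (Lv * norm (xd - yd))" using Lvd[OF xd(1) yd] by linarith
      moreover have "Lv * norm (xd - yd) \<le> Lv * (\<delta> * N + E)" using ndist Lv0 by (intro mult_left_mono) auto
      ultimately show ?thesis unfolding \<Phi>d by linarith
    qed
    have F23: "k * E\<^sup>2 + \<eta> * D\<^sup>2 \<le> Lv * (2 * \<delta> * N + E)"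
      using F2 F3 by (simp add: algebra_simps)
    have kE: "k * E\<^sup>2 \<le> Lv * (2 * \<delta> * N + E)" proof -
      have "0 \<le> \<eta> * D\<^sup>2" using \<eta>0 by simp
      thus ?thesis using F23 by linarith
    qed
    have F4: "E \<le> \<rho> * \<delta>"
    proof (rule ccontr)
      assume "\<not> E \<le> \<rho> * \<delta>"
      hence Eg: "\<rho> * \<delta> < E" by simp
      have E0: "E > 0" proof -
        have "0 < \<rho> * \<delta>" using \<rho> \<delta>0 by simp
        thus ?thesis using Eg by linarith
      qed
      have "\<delta> \<le> E / \<rho>" using Eg \<rho> by (simp add: field_simps)
      hence "2 * N * \<delta> \<le> 2 * N * (E / \<rho>)" using N0 by (intro mult_left_mono) auto
      hence "Lv * (2 * \<delta> * N + E) \<le> Lv * (2 * N * (E / \<rho>) + E)" using Lv0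
        by (intro mult_left_mono) (auto simp: algebra_simps)
      also have "\<dots> = C1 * E" by (simp add: C1_def algebra_simps)
      finally have "k * E * E \<le> C1 * E" using kE by (simp add: power2_eq_square mult.assoc)
      hence kE2: "k * E \<le> C1" using E0 by simp
      have "k * (\<rho> * \<delta>) = C1 + 1" using \<rho> \<delta>0 by (simp add: k_def)
      moreover have "k * (\<rho> * \<delta>) < k * E" using Eg k0 by simp
      ultimately show False using kE2 by linarith
    qed
    have F5: "D < r0"
    proof -
      have "\<eta> * D\<^sup>2 \<le> Lv * (2 * \<delta> * N + E)" proof -
        have "0 \<le> k * E\<^sup>2" using k0 by simp
        thus ?thesis using F23 by linarith
      qed
      also have "\<dots> \<le> Lv * (2 * \<delta> * N + \<rho> * \<delta>)" using F4 Lv0 by (intro mult_left_mono) auto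
      also have "\<dots> = \<delta> * X3" by (simp add: X3_def algebra_simps)
      also have "\<dots> < \<eta> * r0\<^sup>2" by (rule \<delta>a)
      finally have "D\<^sup>2 < r0\<^sup>2" using \<eta>0 by simp
      thus ?thesis using r0 by (simp add: power2_less_imp_less)
    qed
    have "D < \<rho>" using F5 \<rho> unfolding r0_def by linarith
    hence dxz: "dist xd z < \<rho>" by (simp add: D_def dist_norm)
    have dyz: "dist yd z < \<rho>"
    proof -
      have "yd - z = (xd - z) + (\<delta> *\<^sub>R \<nu> + e)" by (simp add: e_def algebra_simps)
      hence "norm (yd - z) \<le> norm (xd - z) + (norm (\<delta> *\<^sub>R \<nu>) + norm e)"
        by (metis norm_triangle_ineq add_left_mono order_trans)
      also have "\<dots> = D + \<delta> * N + E" using \<delta>0 by (simp add: D_def N_def E_def)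
      also have "\<dots> \<le> D + \<delta> * (N + \<rho>)" using F4 by (simp add: algebra_simps)
      also have "\<dots> < \<rho>" using F5 \<delta>b by (simp add: r0_def)
      finally show ?thesis by (simp add: dist_norm)
    qed
    have ydO: "yd \<in> \<Omega>"
      using cone[OF xd(1) dxz dyz \<delta>0] F4 by (simp add: E_def e_def mult.commute)
    have uvd: "u xd - v yd \<le> m + Lv * \<delta> * N"
    proof -
      have "0 \<le> k * E\<^sup>2" "0 \<le> \<eta> * D\<^sup>2" using k0 \<eta>0 by auto
      thus ?thesis using F2 \<Phi>d by linarith
    qed
    define q where "q = (2 * k) *\<^sub>R e"
    define a where "a = xd + \<delta> *\<^sub>R \<nu>"
    have ya: "\<And>y. y - xd - \<delta> *\<^sub>R \<nu> = y - a" by (simp add: a_def algebra_simps)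
    have Phi_y: "\<And>y. y \<in> C \<Longrightarrow> v y - k * (norm (y - a))\<^sup>2 \<le> v yd - k * (norm (yd - a))\<^sup>2"
    proof -
      fix y assume "y \<in> C"
      from Phimin[OF xd(1) xd(2) this] show "v y - k * (norm (y - a))\<^sup>2 \<le> v yd - k * (norm (yd - a))\<^sup>2"
        by (simp add: \<Phi>_def ya)
    qed
    have yda: "yd - a = e" by (simp add: a_def e_def algebra_simps)
    have S1: "lam * v yd + norm q powr p - g yd \<le> 0"
    proof -
      define T where "T = (\<lambda>y. k * (norm (y - a))\<^sup>2)"
      define Gt where "Gt = (\<lambda>y. (2 * k) *\<^sub>R (y - a))"
      have "C1_with UNIV T Gt"
        unfolding C1_with_def
      proof (intro conjI ballI)
        show "open (UNIV :: 'a set)" by simp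
        show "continuous_on UNIV Gt" unfolding Gt_def by (intro continuous_intros)
        fix y :: 'a
        show "(T has_derivative (\<lambda>h. Gt y \<bullet> h)) (at y)"
          unfolding T_def
          by (rule has_derivative_eq_rhs[OF has_derivative_mult_right[OF hd_sq]])
             (simp add: Gt_def fun_eq_iff)
      qed
      moreover have "\<exists>r>0. \<forall>x\<in>ball yd r \<inter> \<Omega>. v x - T x \<le> v yd - T yd"
        using Phi_y OC unfolding T_def by (intro exI[of _ 1]) auto
      ultimately have "lam * v yd + norm (Gt yd) powr p - g yd \<le> 0"
        using vsub ydO unfolding visc_sub1_def by blast
      thus ?thesis by (simp add: Gt_def q_def yda)
    qed
    define G\<phi> where "G\<phi> = q - (2 * \<eta>) *\<^sub>R (xd - z)"
    obtain R where R: "R > 0" "ball yd R \<subseteq> \<Omega>" using ydO op open_contains_ball by blast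
    have up: "\<forall>y\<in>ball yd R. v y - v yd \<le> q \<bullet> (y - yd) + k * (norm (y - yd))\<^sup>2"
    proof
      fix y assume "y \<in> ball yd R"
      hence yC: "y \<in> C" using R OC by blast
      have ya2: "y - a = (y - yd) + e" by (simp add: yda[symmetric])
      have sqe: "(norm (y - a))\<^sup>2 - (norm (yd - a))\<^sup>2 = 2 * (e \<bullet> (y - yd)) + (norm (y - yd))\<^sup>2"
        unfolding ya2 yda by (rule sq_expand)
      have "k * (norm (y - a))\<^sup>2 - k * (norm (yd - a))\<^sup>2 = q \<bullet> (y - yd) + k * (norm (y - yd))\<^sup>2"
      proof -
        have "k * (norm (y - a))\<^sup>2 - k * (norm (yd - a))\<^sup>2 = k * ((norm (y - a))\<^sup>2 - (norm (yd - a))\<^sup>2)"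
          by (simp add: right_diff_distrib)
        also have "\<dots> = k * (2 * (e \<bullet> (y - yd)) + (norm (y - yd))\<^sup>2)" by (simp only: sqe)
        also have "\<dots> = q \<bullet> (y - yd) + k * (norm (y - yd))\<^sup>2" by (simp add: q_def distrib_left)
        finally show ?thesis .
      qed
      then show "v y - v yd \<le> q \<bullet> (y - yd) + k * (norm (y - yd))\<^sup>2" using Phi_y[OF yC] by linarith
    qed
    have S2: "lam * u xd + norm G\<phi> powr p - eps * (- (K + 2 * \<eta>) * n) \<ge> f xd"
    proof -
      define \<phi> where "\<phi> = (\<lambda>x. q \<bullet> (x - xd) - K / 2 * (norm (x - xd))\<^sup>2 - \<eta> * (norm (x - z))\<^sup>2)"
      define Gf where "Gf = (\<lambda>x. q - K *\<^sub>R (x - xd) - (2 * \<eta>) *\<^sub>R (x - z))"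
      define Hf where "Hf = (\<lambda>x::'a. \<lambda>h::'a. (- (K + 2 * \<eta>)) *\<^sub>R h)"
      have "C2_with UNIV \<phi> Gf Hf"
        unfolding C2_with_def
      proof (intro conjI ballI)
        show "open (UNIV :: 'a set)" by simp
        fix x :: 'a
        have dq: "((\<lambda>x. q \<bullet> (x - xd)) has_derivative (\<lambda>h. q \<bullet> h)) (at x)"
          by (auto intro!: derivative_eq_intros)
        show "(\<phi> has_derivative (\<lambda>h. Gf x \<bullet> h)) (at x)"
          unfolding \<phi>_def
          by (rule has_derivative_eq_rhs[OF has_derivative_diff[OF has_derivative_diff[OF dq
                has_derivative_mult_right[OF hd_sq]] has_derivative_mult_right[OF hd_sq]]])
             (simp add: Gf_def fun_eq_iff inner_diff_left algebra_simps)
        show "(Gf has_derivative Hf x) (at x)"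
          unfolding Gf_def Hf_def
          by (auto intro!: derivative_eq_intros simp: fun_eq_iff algebra_simps)
      next
        fix i j :: 'a
        show "continuous_on UNIV (\<lambda>x. Hf x i \<bullet> j)" unfolding Hf_def by simp
      qed
      moreover have "\<exists>r>0. \<forall>x\<in>ball xd r \<inter> closure \<Omega>. u x - \<phi> x \<ge> u xd - \<phi> xd"
      proof (intro exI[of _ "min R (r0 - D)"] conjI ballI)
        show "min R (r0 - D) > 0" using R F5 by simp
        fix x assume x: "x \<in> ball xd (min R (r0 - D)) \<inter> closure \<Omega>"
        hence xC: "x \<in> C" and dx1: "dist xd x < R" and dx2: "dist xd x < r0 - D"
          by (auto simp: C_def)
        have "dist x z \<le> dist x xd + dist xd z" by (rule dist_triangle)
        hence dxz': "dist x z \<le> r0" using dx2 by (simp add: D_def dist_norm norm_minus_commute)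
        define y where "y = x + (yd - xd)"
        have yb: "y \<in> ball yd R" using dx1 by (simp add: y_def dist_norm algebra_simps)
        hence yC: "y \<in> C" using R OC by blast
        have "\<Phi> (xd, yd) \<le> \<Phi> (x, y)" by (rule Phimin[OF xC dxz' yC])
        moreover have "y - x - \<delta> *\<^sub>R \<nu> = e" by (simp add: y_def e_def algebra_simps)
        ultimately have A: "u xd - v yd + \<eta> * D\<^sup>2 \<le> u x - v y + \<eta> * (norm (x - z))\<^sup>2"
          by (simp add: \<Phi>_def E_def D_def e_def)
        have B: "v y \<ge> v yd + q \<bullet> (y - yd) - K/2 * (norm (y - yd))\<^sup>2"
          by (rule semiconvex_support[OF sc R(2) up yb])
        have yy: "y - yd = x - xd" by (simp add: y_def)
        show "u x - \<phi> x \<ge> u xd - \<phi> xd"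
          using A B unfolding \<phi>_def yy by (simp add: D_def)
      qed
      ultimately have "lam * u xd + norm (Gf xd) powr p - eps * lap (Hf xd) \<ge> f xd"
        using usup xd(1) unfolding visc_super2_cl_def C_def by blast
      moreover have "lap (Hf xd) = - (K + 2 * \<eta>) * n" unfolding Hf_def n_def by (rule lap_const)
      moreover have "Gf xd = G\<phi>" by (simp add: Gf_def G\<phi>_def)
      ultimately show ?thesis by simp
    qed
    have qM: "norm q powr p \<le> M" using S1 Mb[OF yd] by linarith
    have qA: "norm q \<le> A0"
    proof (cases "norm q \<le> 1")
      case True thus ?thesis by (simp add: A0_def)
    next
      case False
      hence "norm q powr 1 \<le> norm q powr p" using p2 by (intro powr_mono) auto
      thus ?thesis using qM False by (simp add: A0_def)
    qed
    have B1: "norm ((2 * \<eta>) *\<^sub>R (xd - z)) \<le> 2 * \<eta> * r0"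
      using F5 \<eta>0 by (simp add: D_def)
    have P1: "norm G\<phi> powr p \<le> norm q powr p + Cp * (2 * \<eta> * r0)"
    proof -
      define B where "B = norm ((2 * \<eta>) *\<^sub>R (xd - z))"
      have "norm G\<phi> \<le> norm q + B" unfolding G\<phi>_def B_def by (rule norm_triangle_ineq4)
      hence "norm G\<phi> powr p \<le> (norm q + B) powr p" using p2 by (intro powr_mono2) auto
      also have "(norm q + B) powr p - norm q powr p \<le> p * (A0 + 1) powr (p - 1) * B"
        by (rule powr_incr_bound) (use p2 qA B1 \<eta>1 in \<open>auto simp: B_def\<close>)
      also have "p * (A0 + 1) powr (p - 1) * B \<le> Cp * (2 * \<eta> * r0)"
        unfolding Cp_def[symmetric] using B1 Cp0 by (simp add: B_def mult_left_mono)
      finally show ?thesis by simp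
    qed
    have fg: "f xd - g yd \<ge> mf - Lf * \<delta> * (N + \<rho>)"
    proof -
      have "mf \<le> f yd - g yd" by (rule mfle[OF yd])
      moreover have "f xd - f yd \<ge> - (Lf * norm (xd - yd))" using Lfd[OF xd(1) yd] by linarith
      moreover have "Lf * norm (xd - yd) \<le> Lf * (\<delta> * N + \<rho> * \<delta>)"
        using ndist F4 Lf0 by (intro mult_left_mono) auto
      ultimately show ?thesis by (simp add: algebra_simps)
    qed
    have "lam * (u xd - v yd) \<ge> f xd - g yd - eps * (K + 2 * \<eta>) * n - Cp * (2 * \<eta> * r0)"
      using S1 S2 P1 by (simp add: algebra_simps)
    moreover have "lam * (u xd - v yd) \<le> lam * m + lam * Lv * \<delta> * N"
    proof -
      have "lam * (u xd - v yd) \<le> lam * (m + Lv * \<delta> * N)" using uvd lam by (intro mult_left_mono) auto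
      thus ?thesis by (simp add: algebra_simps)
    qed
    ultimately have "lam * m \<ge> mf - K * n * eps - (\<eta> * X1 + \<delta> * X2)"
      using fg by (simp add: X1_def X2_def algebra_simps)
    moreover have "- K * n * eps = - (K * n * eps)" by simp
    ultimately show ?thesis using \<eta>2 \<delta>c \<gamma> by linarith
  qed
  have "- K * n * eps + mf \<le> lam * m" by (rule field_le_epsilon) (rule main)
  hence "(1 / lam) * (- K * n * eps + mf) \<le> m" using lam by (simp add: field_simps)
  thus ?thesis unfolding C_def[symmetric] n_def[symmetric] Inf1 Inf2 .
qed

end
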